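(* For every $x=(x_1^\top,\dots,x_m^\top)^\top\in\mathbb R^d$ with $x_i\in\mathbb R^{\bar d}$, $$\max\Big\{\|Hx\|,\ \min_{\gamma}\|\nabla f_0(x)+H^\top\gamma\|\Big\}\ \ge\ \frac{\sqrt m}{2}\Big\|\frac1m\sum_{i=1}^m\nabla f_i(\bar x)\Big\|,\qquad\text{where }\bar x=\frac1m\sum_{i=1}^mx_i.$$
   Context: Fix $\epsilon\in(0,1)$, $L_f>0$, integers $m_1\ge2$, $m_2\ge1$ with $m_1m_2$ even, $m=3m_1m_2$, an odd integer $\bar d\ge5$, $d=m\bar d$; $[z]_j$ is the $j$-th coordinate. $J_p\in\mathbb R^{(p-1)\times p}$ has $-1$ at $(k,k)$, $1$ at $(k,k+1)$, zero elsewhere; $H=mL_f(J_m\otimes I_{\bar d})$. $\Psi(u)=0$ ($u\le0$), $1-e^{-u^2}$ ($u>0$); $\Phi(v)=4\arctan v+2\pi$. For $z\in\mathbb R^{\bar d}$: $\varphi(z,1)=-\Psi(1)\Phi([z]_1)$, $\varphi(z,j)=\Psi(-[z]_{j-1})\Phi(-[z]_j)-\Psi([z]_{j-1})\Phi([z]_j)$ ($2\le j\le\bar d$); $h_i(z)=\varphi(z,1)+3\sum_{j=1}^{\lfloor\bar d/2\rfloor}\varphi(z,2j)$ for $1\le i\le m/3$, $h_i(z)=\varphi(z,1)$ for $m/3+1\le i\le 2m/3$, $h_i(z)=\varphi(z,1)+3\sum_{j=1}^{\lfloor\bar d/2\rfloor}\varphi(z,2j+1)$ for $2m/3+1\le i\le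 m$. $f_i(z)=\frac{300\pi\epsilon^2}{mL_f}h_i(\frac{\sqrt mL_fz}{150\pi\epsilon})$, $f_0(x)=\sum_{i=1}^mf_i(x_i)$. *)

theory Defs
  imports "HOL-Analysis.Analysis"
begin

text \<open>Vectors in R^n are represented as functions nat => real, coordinates 1..n.
  Matrices as functions nat => nat => real, entries (row, column), 1-indexed.\<close>

definition enorm :: "nat \<Rightarrow> (nat \<Rightarrow> real) \<Rightarrow> real" where
  "enorm n v = sqrt (\<Sum>j=1..n. (v j)\<^sup>2)"

definition matvec :: "(nat \<Rightarrow> nat \<Rightarrow> real) \<Rightarrow> nat \<Rightarrow> (nat \<Rightarrow> real) \<Rightarrow> (nat \<Rightarrow> real)" where
  "matvec A ncols v = (\<lambda>r. \<Sum>c=1..ncols. A r c * v c)"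

definition matTvec :: "(nat \<Rightarrow> nat \<Rightarrow> real) \<Rightarrow> nat \<Rightarrow> (nat \<Rightarrow> real) \<Rightarrow> (nat \<Rightarrow> real)" where
  "matTvec A nrows v = (\<lambda>c. \<Sum>r=1..nrows. A r c * v r)"

definition Jmat :: "nat \<Rightarrow> nat \<Rightarrow> nat \<Rightarrow> real" where
  "Jmat p k l = (if 1 \<le> k \<and> k \<le> p - 1 \<and> 1 \<le> l \<and> l \<le> p then
       (if l = k then -1 else if l = k + 1 then 1 else 0) else 0)"

text \<open>Kronecker product A \<otimes> I_n (1-indexed).\<close>
definition kron_id :: "(nat \<Rightarrow> nat \<Rightarrow> real) \<Rightarrow> nat \<Rightarrow> nat \<Rightarrow> nat \<Rightarrow> real" where
  "kron_id A n r c = (if 1 \<le> r \<and> 1 \<le> c then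
      A ((r - 1) div n + 1) ((c - 1) div n + 1) *
      (if (r - 1) mod n = (c - 1) mod n then 1 else 0) else 0)"

definition Hmat :: "nat \<Rightarrow> real \<Rightarrow> nat \<Rightarrow> nat \<Rightarrow> nat \<Rightarrow> real" where
  "Hmat m Lf dbar r c = real m * Lf * kron_id (Jmat m) dbar r c"

definition Psi :: "real \<Rightarrow> real" where
  "Psi u = (if u \<le> 0 then 0 else 1 - exp (- (u\<^sup>2)))"

definition Phi :: "real \<Rightarrow> real" where
  "Phi v = 4 * arctan v + 2 * pi"

definition varphi :: "(nat \<Rightarrow> real) \<Rightarrow> nat \<Rightarrow> real" where
  "varphi z j = (if j = 1 then - Psi 1 * Phi (z 1)
     else Psi (- z (j - 1)) * Phi (- z j) - Psi (z (j - 1)) * Phi (z j))"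

definition hfun :: "nat \<Rightarrow> nat \<Rightarrow> nat \<Rightarrow> (nat \<Rightarrow> real) \<Rightarrow> real" where
  "hfun m dbar i z =
     (if 1 \<le> i \<and> 3 * i \<le> m then varphi z 1 + 3 * (\<Sum>j=1..dbar div 2. varphi z (2 * j))
      else if 3 * i \<le> 2 * m then varphi z 1
      else varphi z 1 + 3 * (\<Sum>j=1..dbar div 2. varphi z (2 * j + 1)))"

definition ffun :: "real \<Rightarrow> real \<Rightarrow> nat \<Rightarrow> nat \<Rightarrow> nat \<Rightarrow> (nat \<Rightarrow> real) \<Rightarrow> real" where
  "ffun eps Lf m dbar i z = 300 * pi * eps\<^sup>2 / (real m * Lf) *
     hfun m dbar i (\<lambda>j. sqrt (real m) * Lf * z j / (150 * pi * eps))"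

definition blk :: "nat \<Rightarrow> (nat \<Rightarrow> real) \<Rightarrow> nat \<Rightarrow> (nat \<Rightarrow> real)" where
  "blk dbar x i = (\<lambda>j. x ((i - 1) * dbar + j))"

definition f0 :: "real \<Rightarrow> real \<Rightarrow> nat \<Rightarrow> nat \<Rightarrow> (nat \<Rightarrow> real) \<Rightarrow> real" where
  "f0 eps Lf m dbar x = (\<Sum>i=1..m. ffun eps Lf m dbar i (blk dbar x i))"

definition xbar :: "nat \<Rightarrow> nat \<Rightarrow> (nat \<Rightarrow> real) \<Rightarrow> (nat \<Rightarrow> real)" where
  "xbar m dbar x = (\<lambda>j. (1 / real m) * (\<Sum>i=1..m. blk dbar x i j))"

definition grad :: "nat \<Rightarrow> ((nat \<Rightarrow> real) \<Rightarrow> real) \<Rightarrow> (nat \<Rightarrow> real) \<Rightarrow> (nat \<Rightarrow> real)" where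
  "grad n g z = (\<lambda>j. if 1 \<le> j \<and> j \<le> n then deriv (\<lambda>t. g (z(j := t))) (z j) else 0)"

end

theory Submission
  imports Defs
begin


definition dPsi :: "real \<Rightarrow> real" where
  "dPsi u = (if u \<le> 0 then 0 else 2 * u * exp (- (u\<^sup>2)))"
definition dPhi :: "real \<Rightarrow> real" where
  "dPhi v = 4 / (1 + v\<^sup>2)"

lemma Psi_deriv0: "(Psi has_real_derivative 0) (at 0)"
proof -
  have L: "((\<lambda>h. (Psi (0 + h) - Psi 0) / h) \<longlongrightarrow> 0) (at_left 0)"
  proof (rule Lim_transform_eventually[where f="\<lambda>_. 0"])
    show "((\<lambda>_. 0::real) \<longlongrightarrow> 0) (at_left 0)" by simp
    show "\<forall>\<^sub>F h in at_left 0. 0 = (Psi (0 + h) - Psi 0) / (h::real)"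
      by (auto simp: eventually_at_left_field Psi_def intro: exI[of _ "-1"])
  qed
  have R: "((\<lambda>h. (Psi (0 + h) - Psi 0) / h) \<longlongrightarrow> 0) (at_right 0)"
  proof (rule tendsto_sandwich[where f="\<lambda>_. 0" and h="\<lambda>h. h"])
    show "\<forall>\<^sub>F h in at_right 0. 0 \<le> (Psi (0 + h) - Psi 0) / (h::real)"
      unfolding eventually_at_right_field
      by (auto simp: Psi_def intro!: exI[of _ 1] divide_nonneg_pos)
    show "\<forall>\<^sub>F h in at_right 0. (Psi (0 + h) - Psi 0) / (h::real) \<le> h"
      unfolding eventually_at_right_field
    proof (intro exI[of _ 1] conjI allI impI)
      fix y :: real assume y: "0 < y"
      have "1 - exp (- y\<^sup>2) \<le> y\<^sup>2" using exp_ge_add_one_self[of "- y\<^sup>2"] by simp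
      then show "(Psi (0 + y) - Psi 0) / y \<le> y" using y
        by (simp add: Psi_def pos_divide_le_eq power2_eq_square)
    qed simp
    show "((\<lambda>_. 0::real) \<longlongrightarrow> 0) (at_right 0)" by simp
    show "((\<lambda>h. h::real) \<longlongrightarrow> 0) (at_right 0)" by (simp add: tendsto_ident_at filterlim_at_split[symmetric] tendsto_ident_at)
  qed
  show ?thesis unfolding DERIV_def using L R by (simp add: filterlim_at_split)
qed

lemma Psi_deriv: "(Psi has_real_derivative dPsi u) (at u)"
proof -
  consider "u < 0" | "u = 0" | "u > 0" by linarith
  then show ?thesis
  proof cases
    case 1
    have "((\<lambda>_. 0) has_real_derivative dPsi u) (at u)" using 1 by (simp add: dPsi_def)
    then show ?thesis
      apply (rule has_field_derivative_transform_within_open[where S="{..<0}"])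
      using 1 by (auto simp: Psi_def dPsi_def)
  next
    case 2 then show ?thesis using Psi_deriv0 by (simp add: dPsi_def)
  next
    case 3
    have "((\<lambda>u. 1 - exp (- (u\<^sup>2))) has_real_derivative dPsi u) (at u)"
      using 3 by (auto intro!: derivative_eq_intros simp: dPsi_def)
    then show ?thesis
      apply (rule has_field_derivative_transform_within_open[where S="{0<..}"])
      using 3 by (auto simp: Psi_def dPsi_def)
  qed
qed

lemma Phi_deriv: "(Phi has_real_derivative dPhi v) (at v)"
  unfolding Phi_def dPhi_def
  by (auto intro!: derivative_eq_intros simp: field_simps)

lemma lip_from_deriv:
  fixes f f' :: "real \<Rightarrow> real"
  assumes d: "\<And>x. (f has_real_derivative f' x) (at x)" and b: "\<And>x. \<bar>f' x\<bar> \<le> K"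
  shows "\<bar>f u - f v\<bar> \<le> K * \<bar>u - v\<bar>"
proof -
  have *: "\<bar>f b - f a\<bar> \<le> K * \<bar>b - a\<bar>" if ab: "a < b" for a b
  proof -
    obtain z where "f b - f a = (b - a) * f' z" using MVT2[OF ab, of f f'] d by blast
    then have "\<bar>f b - f a\<bar> = \<bar>b - a\<bar> * \<bar>f' z\<bar>" by (simp add: abs_mult)
    also have "\<dots> \<le> \<bar>b - a\<bar> * K" using b by (intro mult_left_mono) auto
    finally show ?thesis by (simp add: mult.commute)
  qed
  consider "u < v" | "u = v" | "v < u" by linarith
  then show ?thesis
  proof cases
    case 1 then show ?thesis using *[OF 1] by (simp add: abs_minus_commute)
  next
    case 2 then show ?thesis using b[of 0] by simp
  next
    case 3 then show ?thesis using *[OF 3] by simp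
  qed
qed

lemma Psi_ge0: "0 \<le> Psi u" by (simp add: Psi_def)
lemma Psi_le1: "Psi u \<le> 1" by (simp add: Psi_def)
lemma dPsi_ge0: "0 \<le> dPsi u" by (simp add: dPsi_def)
lemma dPsi_le1: "dPsi u \<le> 1"
proof (cases "u \<le> 0")
  case False
  have "2 * u \<le> 1 + u\<^sup>2" using sum_squares_ge_zero[of "u - 1" 0] by (simp add: power2_eq_square algebra_simps)
  also have "\<dots> \<le> exp (u\<^sup>2)" using exp_ge_add_one_self[of "u\<^sup>2"] by simp
  finally have "2 * u * exp (- u\<^sup>2) \<le> exp (u\<^sup>2) * exp (- u\<^sup>2)" by (intro mult_right_mono) auto
  also have "\<dots> = 1" by (simp add: exp_minus[symmetric] exp_add[symmetric])
  finally show ?thesis using False by (simp add: dPsi_def)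
qed (simp add: dPsi_def)

lemma Psi_lip: "\<bar>Psi u - Psi v\<bar> \<le> \<bar>u - v\<bar>"
  using lip_from_deriv[of Psi dPsi 1 u v] Psi_deriv dPsi_ge0 dPsi_le1 by (simp add: abs_le_iff)

lemma exp_sq_bound: "4 * t - 2 \<le> 2 * exp t" if "0 \<le> t" for t :: real
proof -
  have "1 + t / 2 \<le> exp (t / 2)" by (rule exp_ge_add_one_self)
  then have "(1 + t / 2)\<^sup>2 \<le> (exp (t / 2))\<^sup>2" using that by (intro power_mono) auto
  also have "\<dots> = exp t" by (simp add: power2_eq_square exp_add[symmetric])
  finally have "(1 + t / 2)\<^sup>2 \<le> exp t" .
  moreover have "4 * t - 2 \<le> 2 * (1 + t / 2)\<^sup>2"
    using sum_squares_ge_zero[of "t - 2" 0] by (simp add: power2_eq_square algebra_simps)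
  ultimately show ?thesis by linarith
qed

lemma dPsi_lip: "\<bar>dPsi u - dPsi v\<bar> \<le> 2 * \<bar>u - v\<bar>"
proof -
  define g where "g x = 2 * x * exp (- (x\<^sup>2))" for x :: real
  define g' where "g' x = (2 - 4 * x\<^sup>2) * exp (- (x\<^sup>2))" for x :: real
  have gd: "(g has_real_derivative g' x) (at x)" for x
    unfolding g_def g'_def by (auto intro!: derivative_eq_intros simp: algebra_simps power2_eq_square)
  have gb: "\<bar>g' x\<bar> \<le> 2" for x
  proof -
    have e: "exp (- x\<^sup>2) * exp (x\<^sup>2) = 1" by (simp add: exp_add[symmetric])
    have p: "0 < exp (- x\<^sup>2)" by simp
    have a1: "4 * x\<^sup>2 - 2 \<le> 2 * exp (x\<^sup>2)" using exp_sq_bound[of "x\<^sup>2"] by simp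
    have a2: "1 \<le> exp (x\<^sup>2)" by simp
    have a3: "0 \<le> x\<^sup>2" by simp
    have ab4: "\<bar>2 - 4 * x\<^sup>2\<bar> \<le> 2 * exp (x\<^sup>2)"
      using a1 a2 a3 unfolding abs_le_iff by linarith
    have "\<bar>g' x\<bar> = \<bar>2 - 4 * x\<^sup>2\<bar> * exp (- x\<^sup>2)" by (simp add: g'_def abs_mult)
    also have "\<dots> \<le> 2 * exp (x\<^sup>2) * exp (- x\<^sup>2)"
      by (rule mult_right_mono[OF ab4]) simp
    also have "\<dots> = 2" using e by (simp add: mult.commute)
    finally show ?thesis .
  qed
  have gl: "\<bar>g a - g b\<bar> \<le> 2 * \<bar>a - b\<bar>" for a b using lip_from_deriv[OF gd gb] .
  have g0: "\<bar>g a\<bar> \<le> 2 * \<bar>a\<bar>" for a using gl[of a 0] by (simp add: g_def)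
  show ?thesis
  proof (cases "u \<le> 0")
    case True
    show ?thesis
    proof (cases "v \<le> 0")
      case False
      then have "\<bar>dPsi u - dPsi v\<bar> = \<bar>g v\<bar>" using True by (simp add: dPsi_def g_def)
      also have "\<dots> \<le> 2 * \<bar>v\<bar>" by (rule g0)
      also have "\<dots> \<le> 2 * \<bar>u - v\<bar>" using True False by simp
      finally show ?thesis .
    qed (use True in \<open>simp add: dPsi_def\<close>)
  next
    case False
    show ?thesis
    proof (cases "v \<le> 0")
      case True
      then have "\<bar>dPsi u - dPsi v\<bar> = \<bar>g u\<bar>" using False by (simp add: dPsi_def g_def)
      also have "\<dots> \<le> 2 * \<bar>u\<bar>" by (rule g0)
      also have "\<dots> \<le> 2 * \<bar>u - v\<bar>" using True False by simp
      finally show ?thesis .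
    next
      case F2: False
      then show ?thesis using False gl[of u v] by (simp add: dPsi_def g_def)
    qed
  qed
qed

lemma Phi_ge0: "0 \<le> Phi v" using arctan_bounded[of v] by (simp add: Phi_def)
lemma Phi_le: "Phi v \<le> 4 * pi" using arctan_bounded[of v] by (simp add: Phi_def)
lemma dPhi_ge0: "0 \<le> dPhi v" by (simp add: dPhi_def)
lemma dPhi_le4: "dPhi v \<le> 4"
proof -
  have p: "0 < 1 + v\<^sup>2" by (simp add: add_pos_nonneg)
  have "4 \<le> 4 * (1 + v\<^sup>2)" by simp
  then show ?thesis unfolding dPhi_def using p by (simp only: divide_le_eq) simp
qed

lemma Phi_lip: "\<bar>Phi u - Phi v\<bar> \<le> 4 * \<bar>u - v\<bar>"
  using lip_from_deriv[of Phi dPhi 4 u v] Phi_deriv dPhi_ge0 dPhi_le4 by (simp add: abs_le_iff)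

lemma dPhi_lip: "\<bar>dPhi u - dPhi v\<bar> \<le> 3 * \<bar>u - v\<bar>"
proof -
  define g' where "g' x = - 8 * x / (1 + x\<^sup>2)\<^sup>2" for x :: real
  have gd: "(dPhi has_real_derivative g' x) (at x)" for x
  proof -
    have nz: "1 + x\<^sup>2 \<noteq> 0" using add_pos_nonneg[OF zero_less_one zero_le_power2[of x]] by simp
    then have nz2: "1 + x * x \<noteq> 0" by (simp add: power2_eq_square)
    show ?thesis unfolding dPhi_def g'_def
      by (auto intro!: derivative_eq_intros simp: nz nz2 field_simps power2_eq_square)
  qed
  have gb: "\<bar>g' x\<bar> \<le> 3" for x
  proof -
    have "0 < 1 + x\<^sup>2" using add_pos_nonneg[OF zero_less_one zero_le_power2[of x]] by simp
    then have pos: "0 < (1 + x\<^sup>2)\<^sup>2" by simp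
    have "8 * \<bar>x\<bar> \<le> 3 + 6 * x\<^sup>2" using sum_squares_ge_zero[of "3 * \<bar>x\<bar> - 2" 0]
      by (simp add: power2_eq_square algebra_simps)
    also have "\<dots> \<le> 3 * (1 + x\<^sup>2)\<^sup>2"
      using zero_le_power2[of "x\<^sup>2"] by (simp add: power2_eq_square algebra_simps)
    finally show ?thesis using pos by (simp add: g'_def abs_div abs_mult divide_le_eq)
  qed
  show ?thesis using lip_from_deriv[OF gd gb] .
qed



lemma Psi_chain[derivative_intros]:
  "(g has_real_derivative D) (at x within s) \<Longrightarrow> ((\<lambda>x. Psi (g x)) has_real_derivative dPsi (g x) * D) (at x within s)"
  by (rule DERIV_chain2[OF Psi_deriv])
lemma Phi_chain[derivative_intros]:
  "(g has_real_derivative D) (at x within s) \<Longrightarrow> ((\<lambda>x. Phi (g x)) has_real_derivative dPhi (g x) * D) (at x within s)"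
  by (rule DERIV_chain2[OF Phi_deriv])

definition Vb :: "(nat \<Rightarrow> real) \<Rightarrow> nat \<Rightarrow> real" where
  "Vb z j = (if j = 1 then - Psi 1 * dPhi (z 1)
     else - Psi (- z (j - 1)) * dPhi (- z j) - Psi (z (j - 1)) * dPhi (z j))"
definition Va :: "(nat \<Rightarrow> real) \<Rightarrow> nat \<Rightarrow> real" where
  "Va z j = - dPsi (- z (j - 1)) * Phi (- z j) - dPsi (z (j - 1)) * Phi (z j)"
definition dvarphi :: "(nat \<Rightarrow> real) \<Rightarrow> nat \<Rightarrow> nat \<Rightarrow> real" where
  "dvarphi z j k = (if k = j then Vb z j else if 2 \<le> j \<and> k = j - 1 then Va z j else 0)"

lemma varphi_deriv:
  assumes "1 \<le> j"
  shows "((\<lambda>t. varphi (z(k:=t)) j) has_real_derivative dvarphi z j k) (at (z k))"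
proof -
  consider "j = 1" "k = 1" | "j = 1" "k \<noteq> 1" | "j \<ge> 2" "k = j" | "j \<ge> 2" "k = j - 1"
    | "j \<ge> 2" "k \<noteq> j" "k \<noteq> j - 1" using assms by linarith
  then show ?thesis
  proof cases
    case 1
    have e: "(\<lambda>t. varphi (z(k:=t)) j) = (\<lambda>t. - Psi 1 * Phi t)" using 1 by (auto simp: varphi_def)
    show ?thesis unfolding e using 1 by (auto intro!: derivative_eq_intros simp: dvarphi_def Vb_def)
  next
    case 2
    have e: "(\<lambda>t. varphi (z(k:=t)) j) = (\<lambda>t. varphi z j)" using 2 by (auto simp: varphi_def)
    show ?thesis unfolding e using 2 by (auto intro!: derivative_eq_intros simp: dvarphi_def)
  next
    case 3
    have jj: "j - Suc 0 \<noteq> j" using 3 by simp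
    have e: "(\<lambda>t. varphi (z(k:=t)) j) = (\<lambda>t. Psi (- z (j - 1)) * Phi (- t) - Psi (z (j - 1)) * Phi t)"
      using 3 jj by (auto simp: varphi_def)
    show ?thesis unfolding e using 3 by (auto intro!: derivative_eq_intros simp: dvarphi_def Vb_def)
  next
    case 4
    have jj: "j \<noteq> j - Suc 0" using 4 by simp
    have e: "(\<lambda>t. varphi (z(k:=t)) j) = (\<lambda>t. Psi (- t) * Phi (- z j) - Psi t * Phi (z j))"
      using 4 jj by (auto simp: varphi_def)
    show ?thesis unfolding e using 4 by (auto intro!: derivative_eq_intros simp: dvarphi_def Va_def)
  next
    case 5
    have e: "(\<lambda>t. varphi (z(k:=t)) j) = (\<lambda>t. varphi z j)" using 5 by (auto simp: varphi_def)
    show ?thesis unfolding e using 5 by (auto intro!: derivative_eq_intros simp: dvarphi_def)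
  qed
qed

definition wt :: "nat \<Rightarrow> nat \<Rightarrow> nat \<Rightarrow> real" where
  "wt m i j = (if j = 1 then 1 else if 1 \<le> i \<and> 3 * i \<le> m then (if even j then 3 else 0)
      else if 3 * i \<le> 2 * m then 0 else (if odd j then 3 else 0))"

lemma wt_ge0: "0 \<le> wt m i j" by (simp add: wt_def)
lemma wt_le3: "wt m i j \<le> 3" by (simp add: wt_def)

lemma sum_even: "(\<Sum>j=1..(N::nat). F (2 * j)) = (\<Sum>j=1..2 * N. if even j then F j else (0::real))"
  by (induction N) (simp_all add: sum.cl_ivl_Suc)

lemma sum_odd: "(\<Sum>j=1..(N::nat). F (2 * j + 1)) = (\<Sum>j=1..2 * N + 1. if odd j \<and> j \<noteq> 1 then F j else (0::real))"
  by (induction N) (simp_all add: sum.cl_ivl_Suc)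

lemma sum_first: "1 \<le> (n::nat) \<Longrightarrow> (\<Sum>j=1..n. (if j = 1 then a else 0) + g j) = a + (\<Sum>j=1..n. g j)"
  for a :: real
proof -
  assume "1 \<le> n"
  have "(\<Sum>j=1..n'. (if j = 1 then a else 0)) = (if 1 \<le> n' then a else 0)" for n' :: nat
    by (induction n') (auto simp: sum.cl_ivl_Suc)
  then have "(\<Sum>j=1..n. (if j = 1 then a else 0)) = a" using \<open>1 \<le> n\<close> by simp
  then show ?thesis by (simp add: sum.distrib)
qed

lemma hfun_rep:
  assumes "odd n"
  shows "hfun m n i z = (\<Sum>j=1..n. wt m i j * varphi z j)"
proof -
  obtain N where n: "n = 2 * N + 1" using assms oddE by blast
  have n1: "1 \<le> n" using n by simp
  have ndiv: "n div 2 = N" using n by simp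
  have A: "(\<Sum>j=1..n. (if even j then varphi z j else 0)) = (\<Sum>j=1..2*N. (if even j then varphi z j else 0))"
    using n by (simp add: sum.cl_ivl_Suc)
  show ?thesis
  proof (cases "1 \<le> i \<and> 3 * i \<le> m")
    case True
    have "(\<Sum>j=1..n. wt m i j * varphi z j) = (\<Sum>j=1..n. (if j = 1 then varphi z 1 else 0) + 3 * (if even j then varphi z j else 0))"
      using True by (intro sum.cong) (auto simp: wt_def)
    also have "\<dots> = varphi z 1 + 3 * (\<Sum>j=1..n. (if even j then varphi z j else 0))"
      by (subst sum_first[OF n1]) (simp add: sum_distrib_left)
    moreover have "(\<Sum>j=1..N. varphi z (2*j)) = (\<Sum>j=1..n. if even j then varphi z j else 0)"
      using A sum_even[of "\<lambda>j. varphi z j" N] by simp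
    ultimately show ?thesis using True by (simp add: hfun_def ndiv)
  next
    case F1: False
    show ?thesis
    proof (cases "3 * i \<le> 2 * m")
      case True
      have "(\<Sum>j=1..n. wt m i j * varphi z j) = (\<Sum>j=1..n. (if j = 1 then varphi z 1 else 0) + 0)"
        using True F1 by (intro sum.cong) (auto simp: wt_def)
      also have "\<dots> = varphi z 1" by (subst sum_first[OF n1]) simp
      finally show ?thesis using True F1 unfolding hfun_def by auto
    next
      case False
      have "(\<Sum>j=1..n. wt m i j * varphi z j) = (\<Sum>j=1..n. (if j = 1 then varphi z 1 else 0) + 3 * (if odd j \<and> j \<noteq> 1 then varphi z j else 0))"
        using False F1 by (intro sum.cong) (auto simp: wt_def)
      also have "\<dots> = varphi z 1 + 3 * (\<Sum>j=1..n. (if odd j \<and> j \<noteq> 1 then varphi z j else 0))"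
        by (subst sum_first[OF n1]) (simp add: sum_distrib_left)
      moreover have "(\<Sum>j=1..N. varphi z (2*j+1)) = (\<Sum>j=1..n. if odd j \<and> j \<noteq> 1 then varphi z j else 0)"
        using sum_odd[of "\<lambda>j. varphi z j" N] n by simp
      ultimately show ?thesis using False F1 by (simp add: hfun_def ndiv)
    qed
  qed
qed

definition Dh :: "nat \<Rightarrow> nat \<Rightarrow> nat \<Rightarrow> (nat \<Rightarrow> real) \<Rightarrow> nat \<Rightarrow> real" where
  "Dh m n i z k = (\<Sum>j=1..n. wt m i j * dvarphi z j k)"

lemma hfun_deriv:
  assumes "odd n"
  shows "((\<lambda>t. hfun m n i (z(k:=t))) has_real_derivative Dh m n i z k) (at (z k))"
  unfolding hfun_rep[OF assms] Dh_def
  by (intro DERIV_sum DERIV_cmult varphi_deriv) simp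

lemma Dh_closed:
  assumes "1 \<le> k" "k \<le> n"
  shows "Dh m n i z k = wt m i k * Vb z k + (if k + 1 \<le> n then wt m i (k+1) * Va z (k+1) else 0)"
proof -
  have "Dh m n i z k = (\<Sum>j=1..n. (if j = k then wt m i k * Vb z k else 0) + (if j = k + 1 then wt m i (k+1) * Va z (k+1) else 0))"
    unfolding Dh_def using assms by (intro sum.cong) (auto simp: dvarphi_def)
  also have "\<dots> = wt m i k * Vb z k + (if k + 1 \<le> n then wt m i (k+1) * Va z (k+1) else 0)"
    using assms by (simp add: sum.distrib sum.delta)
  finally show ?thesis .
qed



lemma prod_lip:
  fixes f1 f2 g1 g2 :: real
  assumes "\<bar>f1 - f2\<bar> \<le> A" "\<bar>g1 - g2\<bar> \<le> B" "\<bar>f2\<bar> \<le> Mf" "\<bar>g1\<bar> \<le> Mg"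
  shows "\<bar>f1 * g1 - f2 * g2\<bar> \<le> Mg * A + Mf * B"
proof -
  have "f1 * g1 - f2 * g2 = (f1 - f2) * g1 + f2 * (g1 - g2)" by (simp add: algebra_simps)
  then have "\<bar>f1 * g1 - f2 * g2\<bar> \<le> \<bar>f1 - f2\<bar> * \<bar>g1\<bar> + \<bar>f2\<bar> * \<bar>g1 - g2\<bar>"
    by (simp add: abs_mult[symmetric] abs_triangle_ineq)
  also have "\<dots> \<le> A * Mg + Mf * B"
    using assms by (intro add_mono mult_mono) auto
  finally show ?thesis by (simp add: mult.commute)
qed

lemma PsidPhi_lip: "\<bar>Psi a * dPhi b - Psi a' * dPhi b'\<bar> \<le> 4 * \<bar>a - a'\<bar> + 3 * \<bar>b - b'\<bar>"
proof -
  have "\<bar>Psi a * dPhi b - Psi a' * dPhi b'\<bar> \<le> 4 * \<bar>a - a'\<bar> + 1 * (3 * \<bar>b - b'\<bar>)"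
    using Psi_lip[of a a'] dPhi_lip[of b b'] Psi_ge0[of a'] Psi_le1[of a'] dPhi_ge0[of b] dPhi_le4[of b]
    by (intro prod_lip) auto
  then show ?thesis by simp
qed

lemma dPsiPhi_lip: "\<bar>dPsi a * Phi b - dPsi a' * Phi b'\<bar> \<le> 8 * pi * \<bar>a - a'\<bar> + 4 * \<bar>b - b'\<bar>"
proof -
  have "\<bar>dPsi a * Phi b - dPsi a' * Phi b'\<bar> \<le> (4 * pi) * (2 * \<bar>a - a'\<bar>) + 1 * (4 * \<bar>b - b'\<bar>)"
    using dPsi_lip[of a a'] Phi_lip[of b b'] dPsi_ge0[of a'] dPsi_le1[of a'] Phi_ge0[of b] Phi_le[of b]
    by (intro prod_lip) auto
  then show ?thesis by simp
qed

lemma Vb_lip: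
  assumes "1 \<le> k"
  shows "\<bar>Vb y k - Vb y' k\<bar> \<le> (if k = 1 then 0 else 8 * \<bar>y (k-1) - y' (k-1)\<bar>) + 6 * \<bar>y k - y' k\<bar>"
proof (cases "k = 1")
  case True
  have "Vb y k - Vb y' k = Psi 1 * (dPhi (y' 1) - dPhi (y 1))"
    using True by (simp add: Vb_def algebra_simps)
  then have "\<bar>Vb y k - Vb y' k\<bar> = Psi 1 * \<bar>dPhi (y 1) - dPhi (y' 1)\<bar>"
    using Psi_ge0[of 1] by (simp add: abs_mult abs_minus_commute)
  also have "\<dots> \<le> 1 * (3 * \<bar>y 1 - y' 1\<bar>)"
    using Psi_le1[of 1] Psi_ge0[of 1] dPhi_lip by (intro mult_mono) auto
  finally show ?thesis using True by simp
next
  case False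
  have "\<bar>Vb y k - Vb y' k\<bar> \<le> \<bar>Psi (- y (k-1)) * dPhi (- y k) - Psi (- y' (k-1)) * dPhi (- y' k)\<bar>
      + \<bar>Psi (y (k-1)) * dPhi (y k) - Psi (y' (k-1)) * dPhi (y' k)\<bar>"
    using False by (simp add: Vb_def) linarith
  also have "\<dots> \<le> (4 * \<bar>y (k-1) - y' (k-1)\<bar> + 3 * \<bar>y k - y' k\<bar>) + (4 * \<bar>y (k-1) - y' (k-1)\<bar> + 3 * \<bar>y k - y' k\<bar>)"
    using PsidPhi_lip[of "- y (k-1)" "- y k" "- y' (k-1)" "- y' k"] PsidPhi_lip[of "y (k-1)" "y k" "y' (k-1)" "y' k"]
    by (intro add_mono) (simp_all add: abs_minus_commute add.commute)
  finally show ?thesis using False by simp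
qed

lemma Va_lip:
  shows "\<bar>Va y j - Va y' j\<bar> \<le> 16 * pi * \<bar>y (j-1) - y' (j-1)\<bar> + 8 * \<bar>y j - y' j\<bar>"
proof -
  have "\<bar>Va y j - Va y' j\<bar> \<le> \<bar>dPsi (- y (j-1)) * Phi (- y j) - dPsi (- y' (j-1)) * Phi (- y' j)\<bar>
      + \<bar>dPsi (y (j-1)) * Phi (y j) - dPsi (y' (j-1)) * Phi (y' j)\<bar>"
    by (simp add: Va_def) linarith
  also have "\<dots> \<le> (8 * pi * \<bar>y (j-1) - y' (j-1)\<bar> + 4 * \<bar>y j - y' j\<bar>) + (8 * pi * \<bar>y (j-1) - y' (j-1)\<bar> + 4 * \<bar>y j - y' j\<bar>)"
    using dPsiPhi_lip[of "- y (j-1)" "- y j" "- y' (j-1)" "- y' j"] dPsiPhi_lip[of "y (j-1)" "y j" "y' (j-1)" "y' j"]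
    by (intro add_mono) (simp_all add: abs_minus_commute add.commute)
  finally show ?thesis by simp
qed

lemma Dh_lip_pt:
  fixes y y' :: "nat \<Rightarrow> real" and n k :: nat
  assumes k: "1 \<le> k" "k \<le> n"
  defines "e \<equiv> (\<lambda>j. if 1 \<le> j \<and> j \<le> n then \<bar>y j - y' j\<bar> else 0)"
  shows "\<bar>Dh m n i y k - Dh m n i y' k\<bar> \<le> 24 * e (k-1) + (18 + 48 * pi) * e k + 24 * e (k+1)"
proof -
  define A where "A = (if k + 1 \<le> n then wt m i (k+1) * (Va y (k+1) - Va y' (k+1)) else 0)"
  have eq: "Dh m n i y k - Dh m n i y' k = wt m i k * (Vb y k - Vb y' k) + A"
    using k by (simp add: Dh_closed A_def algebra_simps)
  have b1: "\<bar>Vb y k - Vb y' k\<bar> \<le> 8 * e (k-1) + 6 * e k"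
  proof -
    have "(if k = 1 then 0 else 8 * \<bar>y (k-1) - y' (k-1)\<bar>) \<le> 8 * e (k-1)"
    proof (cases "k = 1")
      case False
      then have "1 \<le> k - 1 \<and> k - 1 \<le> n" using k by arith
      then show ?thesis using False by (simp add: e_def)
    qed (simp add: e_def)
    moreover have "\<bar>y k - y' k\<bar> = e k" using k by (simp add: e_def)
    ultimately show ?thesis using Vb_lip[OF k(1), of y y'] by linarith
  qed
  have b2: "\<bar>A\<bar> \<le> 3 * (16 * pi * e k + 8 * e (k+1))"
  proof (cases "k + 1 \<le> n")
    case True
    have "\<bar>A\<bar> = wt m i (k+1) * \<bar>Va y (k+1) - Va y' (k+1)\<bar>" using True wt_ge0 by (simp add: A_def abs_mult)
    also have "\<dots> \<le> 3 * (16 * pi * e k + 8 * e (k+1))"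
      using Va_lip[of y "k+1" y'] True k wt_ge0 wt_le3 by (intro mult_mono) (auto simp: e_def)
    finally show ?thesis .
  next
    case False
    have "0 \<le> e j" for j by (simp add: e_def)
    then show ?thesis using False by (simp add: A_def)
  qed
  have "\<bar>wt m i k * (Vb y k - Vb y' k)\<bar> \<le> 3 * (8 * e (k-1) + 6 * e k)"
  proof -
    have "\<bar>wt m i k * (Vb y k - Vb y' k)\<bar> = wt m i k * \<bar>Vb y k - Vb y' k\<bar>" using wt_ge0 by (simp add: abs_mult)
    also have "\<dots> \<le> 3 * (8 * e (k-1) + 6 * e k)" using b1 wt_ge0 wt_le3 by (intro mult_mono) auto
    finally show ?thesis .
  qed
  then have "\<bar>Dh m n i y k - Dh m n i y' k\<bar> \<le> 3 * (8 * e (k-1) + 6 * e k) + 3 * (16 * pi * e k + 8 * e (k+1))"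
    using b2 eq by linarith
  then show ?thesis by (simp add: algebra_simps)
qed



lemma shiftL: "(\<Sum>k=1..n. g (k - 1)) + g n = g 0 + (\<Sum>k=1..(n::nat). g k :: real)"
  by (induction n) (auto simp: sum.cl_ivl_Suc)
lemma shiftR: "(\<Sum>k=1..n. g (k + 1)) + g 1 = (\<Sum>k=1..(n::nat). g k :: real) + g (n + 1)"
  by (induction n) (auto simp: sum.cl_ivl_Suc)

lemma three_cs:
  fixes a b c x y z :: real
  assumes "0 \<le> a" "0 \<le> b" "0 \<le> c"
  shows "(a * x + b * y + c * z)\<^sup>2 \<le> (a + b + c) * (a * x\<^sup>2 + b * y\<^sup>2 + c * z\<^sup>2)"
proof -
  have "(a + b + c) * (a * x\<^sup>2 + b * y\<^sup>2 + c * z\<^sup>2) - (a * x + b * y + c * z)\<^sup>2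
      = a * b * (x - y)\<^sup>2 + a * c * (x - z)\<^sup>2 + b * c * (y - z)\<^sup>2"
    by (simp add: power2_eq_square algebra_simps)
  moreover have "0 \<le> a * b * (x - y)\<^sup>2 + a * c * (x - z)\<^sup>2 + b * c * (y - z)\<^sup>2"
    using assms by (intro add_nonneg_nonneg mult_nonneg_nonneg) auto
  ultimately show ?thesis by linarith
qed

lemma Dh_lip:
  "L2_set (\<lambda>k. Dh m n i y k - Dh m n i y' k) {1..n} \<le> (66 + 48 * pi) * L2_set (\<lambda>k. y k - y' k) {1..n}"
proof -
  define e where "e = (\<lambda>j. if 1 \<le> j \<and> j \<le> n then \<bar>y j - y' j\<bar> else 0)"
  define a :: real where "a = 24"
  define b :: real where "b = 18 + 48 * pi"
  define S where "S = a + b + a"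
  have S: "S = 66 + 48 * pi" by (simp add: S_def a_def b_def)
  have a0: "0 \<le> a" and b0: "0 \<le> b" by (simp_all add: a_def b_def)
  have S0: "0 \<le> S" using a0 b0 by (simp add: S_def)
  have e0: "0 \<le> e j" for j by (simp add: e_def)
  have pt: "(Dh m n i y k - Dh m n i y' k)\<^sup>2 \<le> S * (a * (e (k-1))\<^sup>2 + b * (e k)\<^sup>2 + a * (e (k+1))\<^sup>2)"
    if "k \<in> {1..n}" for k
  proof -
    have "\<bar>Dh m n i y k - Dh m n i y' k\<bar> \<le> a * e (k-1) + b * e k + a * e (k+1)"
      using Dh_lip_pt[of k n m i y y'] that unfolding e_def a_def b_def by (auto split: if_splits)
    then have "(Dh m n i y k - Dh m n i y' k)\<^sup>2 \<le> (a * e (k-1) + b * e k + a * e (k+1))\<^sup>2"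
      by (metis abs_ge_zero order_trans power2_abs power_mono)
    also have "\<dots> \<le> S * (a * (e (k-1))\<^sup>2 + b * (e k)\<^sup>2 + a * (e (k+1))\<^sup>2)"
      unfolding S_def by (rule three_cs[OF a0 b0 a0])
    finally show ?thesis .
  qed
  define E where "E = (\<Sum>k=1..n. (e k)\<^sup>2)"
  have ez: "e 0 = 0" "e (n+1) = 0" by (simp_all add: e_def)
  have L: "(\<Sum>k=1..n. (e (k-1))\<^sup>2) \<le> E"
    using shiftL[of "\<lambda>k. (e k)\<^sup>2" n] ez unfolding E_def apply (simp add: ez) using zero_le_power2[of "e n"] by linarith
  have R: "(\<Sum>k=1..n. (e (k+1))\<^sup>2) \<le> E"
    using shiftR[of "\<lambda>k. (e k)\<^sup>2" n] ez unfolding E_def apply simp using zero_le_power2[of "e (Suc 0)"] by linarith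
  have "(\<Sum>k=1..n. (Dh m n i y k - Dh m n i y' k)\<^sup>2) \<le> (\<Sum>k=1..n. S * (a * (e (k-1))\<^sup>2 + b * (e k)\<^sup>2 + a * (e (k+1))\<^sup>2))"
    by (rule sum_mono) (rule pt)
  also have "\<dots> = S * (a * (\<Sum>k=1..n. (e (k-1))\<^sup>2) + b * E + a * (\<Sum>k=1..n. (e (k+1))\<^sup>2))"
    by (simp add: E_def sum.distrib sum_distrib_left[symmetric])
  also have "\<dots> \<le> S * (a * E + b * E + a * E)"
    using L R a0 b0 S0 by (intro mult_left_mono add_mono) auto
  also have "\<dots> = S\<^sup>2 * E" by (simp add: S_def power2_eq_square algebra_simps)
  finally have *: "(\<Sum>k=1..n. (Dh m n i y k - Dh m n i y' k)\<^sup>2) \<le> S\<^sup>2 * E" .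
  have E: "E = (\<Sum>k=1..n. (y k - y' k)\<^sup>2)" unfolding E_def by (intro sum.cong) (auto simp: e_def)
  have "L2_set (\<lambda>k. Dh m n i y k - Dh m n i y' k) {1..n} \<le> sqrt (S\<^sup>2 * E)"
    unfolding L2_set_def using * by simp
  also have "\<dots> = S * L2_set (\<lambda>k. y k - y' k) {1..n}"
    using S0 by (simp add: real_sqrt_mult L2_set_def E)
  finally show ?thesis using S by simp
qed



definition Cf :: "real \<Rightarrow> real \<Rightarrow> nat \<Rightarrow> real" where
  "Cf eps Lf m = 300 * pi * eps\<^sup>2 / (real m * Lf)"
definition sf :: "real \<Rightarrow> real \<Rightarrow> nat \<Rightarrow> real" where
  "sf eps Lf m = sqrt (real m) * Lf / (150 * pi * eps)"
definition G :: "real \<Rightarrow> real \<Rightarrow> nat \<Rightarrow> nat \<Rightarrow> nat \<Rightarrow> (nat \<Rightarrow> real) \<Rightarrow> nat \<Rightarrow> real" where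
  "G eps Lf m n i z k = Cf eps Lf m * (Dh m n i (\<lambda>j. sf eps Lf m * z j) k * sf eps Lf m)"

lemma ffun_alt: "ffun eps Lf m n i z = Cf eps Lf m * hfun m n i (\<lambda>j. sf eps Lf m * z j)"
  by (simp add: ffun_def Cf_def sf_def)

lemma ffun_deriv:
  assumes "odd n"
  shows "((\<lambda>t. ffun eps Lf m n i (z(k:=t))) has_real_derivative G eps Lf m n i z k) (at (z k))"
proof -
  define s where "s = sf eps Lf m"
  define y where "y = (\<lambda>j. s * z j)"
  have e: "(\<lambda>t. ffun eps Lf m n i (z(k:=t))) = (\<lambda>t. Cf eps Lf m * (\<lambda>t. hfun m n i (y(k:=t))) (s * t))"
    by (auto simp: ffun_alt y_def s_def fun_upd_def intro!: ext arg_cong[where f="hfun m n i"])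
  have d1: "((\<lambda>t. hfun m n i (y(k:=t))) has_real_derivative Dh m n i y k) (at (s * z k))"
    using hfun_deriv[OF assms, of m i y k] by (simp add: y_def)
  have d2: "((\<lambda>t. s * t) has_real_derivative s) (at (z k))"
    by (auto intro!: derivative_eq_intros)
  have "((\<lambda>t. (\<lambda>t. hfun m n i (y(k:=t))) (s * t)) has_real_derivative Dh m n i y k * s) (at (z k))"
    by (rule DERIV_chain2[OF d1 d2])
  then show ?thesis unfolding e G_def y_def s_def by (intro DERIV_cmult) simp
qed

lemma grad_ffun:
  assumes "odd n" "1 \<le> k" "k \<le> n"
  shows "grad n (ffun eps Lf m n i) z k = G eps Lf m n i z k"
  using assms ffun_deriv[OF assms(1)] by (simp add: grad_def DERIV_imp_deriv)

lemma Cf_sf: "0 < eps \<Longrightarrow> 0 < Lf \<Longrightarrow> 0 < m \<Longrightarrow> Cf eps Lf m * (sf eps Lf m)\<^sup>2 = Lf / (75 * pi)"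
  by (simp add: Cf_def sf_def power_mult_distrib power_divide field_simps power2_eq_square)

lemma G_lip:
  assumes "0 < eps" "0 < Lf" "0 < m"
  shows "L2_set (\<lambda>k. G eps Lf m n i z k - G eps Lf m n i z' k) {1..n} \<le> Lf * L2_set (\<lambda>k. z k - z' k) {1..n}"
proof -
  define C where "C = Cf eps Lf m"
  define s where "s = sf eps Lf m"
  have C0: "0 \<le> C" using assms by (simp add: C_def Cf_def)
  have s0: "0 \<le> s" using assms by (simp add: s_def sf_def)
  have "L2_set (\<lambda>k. G eps Lf m n i z k - G eps Lf m n i z' k) {1..n}
      = L2_set (\<lambda>k. (C * s) * (Dh m n i (\<lambda>j. s * z j) k - Dh m n i (\<lambda>j. s * z' j) k)) {1..n}"
    unfolding G_def C_def s_def by (simp add: algebra_simps)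
  also have "\<dots> = (C * s) * L2_set (\<lambda>k. Dh m n i (\<lambda>j. s * z j) k - Dh m n i (\<lambda>j. s * z' j) k) {1..n}"
    using C0 s0 by (simp add: L2_set_right_distrib)
  also have "\<dots> \<le> (C * s) * ((66 + 48 * pi) * L2_set (\<lambda>k. s * z k - s * z' k) {1..n})"
    using C0 s0 Dh_lip[of m n i "\<lambda>j. s * z j" "\<lambda>j. s * z' j"] by (intro mult_left_mono) auto
  also have "L2_set (\<lambda>k. s * z k - s * z' k) {1..n} = s * L2_set (\<lambda>k. z k - z' k) {1..n}"
    using s0 by (simp add: L2_set_right_distrib right_diff_distrib)
  also have "(C * s) * ((66 + 48 * pi) * (s * L2_set (\<lambda>k. z k - z' k) {1..n}))
      = (C * s\<^sup>2) * (66 + 48 * pi) * L2_set (\<lambda>k. z k - z' k) {1..n}"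
    by (simp add: power2_eq_square algebra_simps)
  also have "C * s\<^sup>2 = Lf / (75 * pi)" using Cf_sf[OF assms] by (simp add: C_def s_def)
  also have "Lf / (75 * pi) * (66 + 48 * pi) * L2_set (\<lambda>k. z k - z' k) {1..n} \<le> Lf * L2_set (\<lambda>k. z k - z' k) {1..n}"
  proof -
    have "66 + 48 * pi \<le> 75 * pi" using pi_gt3 by linarith
    then have "Lf / (75 * pi) * (66 + 48 * pi) \<le> Lf"
      using assms pi_gt_zero by (simp add: field_simps)
    then show ?thesis by (intro mult_right_mono) simp_all
  qed
  finally show ?thesis .
qed



lemma sum_blocks: "(\<Sum>r=1..a*n. F r) = (\<Sum>p=1..a. \<Sum>k=1..n. F ((p-1)*n + k))" for F :: "nat \<Rightarrow> real"
proof (induction a)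
  case 0 then show ?case by simp
next
  case (Suc a)
  have "(\<Sum>r=1..Suc a * n. F r) = (\<Sum>r=1..a*n + n. F r)" by (simp add: add.commute)
  also have "\<dots> = (\<Sum>r=1..a*n. F r) + (\<Sum>r=a*n+1..a*n + n. F r)" by (rule sum.ub_add_nat) simp
  also have "(\<Sum>r=a*n+1..a*n + n. F r) = (\<Sum>k=1..n. F (a*n + k))"
    using sum.shift_bounds_cl_nat_ivl[of F 1 "a*n" n] by (simp add: add.commute)
  finally show ?case using Suc by (simp add: sum.cl_ivl_Suc)
qed

lemma idx_eq: "1 \<le> q \<Longrightarrow> (p-1)*n + q - 1 = (q - 1) + n * (p - 1)" for p q n :: nat
  by (simp add: mult.commute)

lemma idx_div: "1 \<le> q \<Longrightarrow> q \<le> n \<Longrightarrow> ((p-1)*n + q - 1) div n = p - 1" for p q n :: nat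
proof -
  assume a: "1 \<le> q" "q \<le> n"
  have g: "(r + n * b) div n = b" if "r < n" for r b :: nat using that by simp
  have "(q - 1 + n * (p - 1)) div n = p - 1" using a by (intro g) simp
  then show ?thesis by (subst idx_eq[OF a(1)])
qed

lemma idx_mod: "1 \<le> q \<Longrightarrow> q \<le> n \<Longrightarrow> ((p-1)*n + q - 1) mod n = q - 1" for p q n :: nat
proof -
  assume a: "1 \<le> q" "q \<le> n"
  have g: "(r + n * b) mod n = r" if "r < n" for r b :: nat using that by simp
  have "(q - 1 + n * (p - 1)) mod n = q - 1" using a by (intro g) simp
  then show ?thesis by (subst idx_eq[OF a(1)])
qed

lemma blk_inj:
  fixes i i' j k n :: nat
  assumes "1 \<le> j" "j \<le> n" "1 \<le> k" "k \<le> n" "(i'-1)*n + j = (i-1)*n + k" "1 \<le> i" "1 \<le> i'"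
  shows "i' = i \<and> j = k"
proof -
  have "((i'-1)*n + j - 1) div n = ((i-1)*n + k - 1) div n" using assms(5) by simp
  then have "i' - 1 = i - 1" using idx_div[of j n i'] idx_div[of k n i] assms by simp
  moreover have "((i'-1)*n + j - 1) mod n = ((i-1)*n + k - 1) mod n" using assms(5) by simp
  then have "j - 1 = k - 1" using idx_mod[of j n i'] idx_mod[of k n i] assms by simp
  ultimately show ?thesis using assms by simp
qed

lemma Jmat_wsum:
  assumes "1 \<le> p" "p \<le> m - 1"
  shows "(\<Sum>i=1..m. Jmat m p i * f i) = f (p+1) - f p"
proof -
  have pm: "p + 1 \<le> m" "p \<le> m" using assms by arith+
  have "(\<Sum>i=1..m. Jmat m p i * f i) = (\<Sum>i=1..m. (if i = p + 1 then f (p+1) else 0) + (if i = p then - f p else 0))"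
    using assms by (intro sum.cong) (auto simp: Jmat_def)
  also have "\<dots> = f (p+1) - f p" using assms pm by (simp add: sum.distrib sum.delta)
  finally show ?thesis .
qed

lemma Hmat_blk:
  assumes "1 \<le> p" "1 \<le> q" "q \<le> n" "1 \<le> i" "1 \<le> k" "k \<le> n"
  shows "Hmat m L n ((p-1)*n + q) ((i-1)*n + k) = real m * L * Jmat m p i * (if q = k then 1 else 0)"
proof -
  have "((p-1)*n + q - 1) div n + 1 = p" "((i-1)*n + k - 1) div n + 1 = i"
    using idx_div[of q n p] idx_div[of k n i] assms by simp_all
  moreover have "((p-1)*n + q - 1) mod n = ((i-1)*n + k - 1) mod n \<longleftrightarrow> q = k"
    using idx_mod[of q n p] idx_mod[of k n i] assms by auto
  ultimately show ?thesis using assms by (simp add: Hmat_def kron_id_def)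
qed

lemma matvec_H:
  assumes "1 \<le> p" "p \<le> m - 1" "1 \<le> q" "q \<le> n"
  shows "matvec (Hmat m L n) (m*n) x ((p-1)*n + q) = real m * L * (x (p*n + q) - x ((p-1)*n + q))"
proof -
  have "matvec (Hmat m L n) (m*n) x ((p-1)*n + q) = (\<Sum>i=1..m. \<Sum>k=1..n. Hmat m L n ((p-1)*n + q) ((i-1)*n + k) * x ((i-1)*n + k))"
    unfolding matvec_def by (subst sum_blocks) simp
  also have "\<dots> = (\<Sum>i=1..m. \<Sum>k=1..n. (if k = q then real m * L * Jmat m p i * x ((i-1)*n + q) else 0))"
  proof (intro sum.cong refl)
    fix i k assume i: "i \<in> {1..m}" and k: "k \<in> {1..n}"
    show "Hmat m L n ((p-1)*n + q) ((i-1)*n + k) * x ((i-1)*n + k) = (if k = q then real m * L * Jmat m p i * x ((i-1)*n + q) else 0)"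
      using Hmat_blk[of p q n i k m L] assms i k by auto
  qed
  also have "\<dots> = (\<Sum>i=1..m. real m * L * (Jmat m p i * x ((i-1)*n + q)))"
    using assms by (simp add: sum.delta mult.assoc)
  also have "\<dots> = real m * L * (\<Sum>i=1..m. Jmat m p i * x ((i-1)*n + q))"
    by (simp add: sum_distrib_left)
  also have "\<dots> = real m * L * (x (p*n + q) - x ((p-1)*n + q))"
    using Jmat_wsum[OF assms(1,2), of "\<lambda>i. x ((i-1)*n + q)"] by simp
  finally show ?thesis .
qed

lemma HT_colsum:
  assumes "1 \<le> k" "k \<le> n"
  shows "(\<Sum>i=1..m. matTvec (Hmat m L n) ((m-1)*n) g ((i-1)*n + k)) = 0"
proof -
  have "(\<Sum>i=1..m. matTvec (Hmat m L n) ((m-1)*n) g ((i-1)*n + k))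
      = (\<Sum>r=1..(m-1)*n. g r * (\<Sum>i=1..m. Hmat m L n r ((i-1)*n + k)))"
    unfolding matTvec_def by (subst sum.swap) (simp add: sum_distrib_left mult.commute)
  also have "\<dots> = (\<Sum>p=1..m-1. \<Sum>q=1..n. g ((p-1)*n+q) * (\<Sum>i=1..m. Hmat m L n ((p-1)*n+q) ((i-1)*n + k)))"
    by (rule sum_blocks)
  also have "\<dots> = 0"
  proof (intro sum.neutral ballI)
    fix p q assume p: "p \<in> {1..m-1}" and q: "q \<in> {1..n}"
    have "(\<Sum>i=1..m. Hmat m L n ((p-1)*n+q) ((i-1)*n + k)) = (\<Sum>i=1..m. Jmat m p i * (real m * L * (if q = k then 1 else 0)))"
    proof (intro sum.cong refl)
      fix i assume i: "i \<in> {1..m}"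
      show "Hmat m L n ((p-1)*n+q) ((i-1)*n + k) = Jmat m p i * (real m * L * (if q = k then 1 else 0))"
        using Hmat_blk[of p q n i k m L] p q i assms by simp
    qed
    also have "\<dots> = 0" using Jmat_wsum[of p m "\<lambda>_. real m * L * (if q = k then 1 else 0)"] p by simp
    finally show "g ((p-1)*n+q) * (\<Sum>i=1..m. Hmat m L n ((p-1)*n+q) ((i-1)*n + k)) = 0" by simp
  qed
  finally show ?thesis .
qed

lemma varphi_local:
  assumes "1 \<le> j" "j \<le> n" "\<And>l. 1 \<le> l \<Longrightarrow> l \<le> n \<Longrightarrow> z l = z' l"
  shows "varphi z j = varphi z' j"
  using assms by (cases "j = 1") (auto simp: varphi_def)

lemma hfun_local:
  assumes "odd n" "\<And>l. 1 \<le> l \<Longrightarrow> l \<le> n \<Longrightarrow> z l = z' l"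
  shows "hfun m n i z = hfun m n i z'"
  unfolding hfun_rep[OF assms(1)] using varphi_local[of _ n z z'] assms(2) by (intro sum.cong) auto

lemma ffun_local:
  assumes "odd n" "\<And>l. 1 \<le> l \<Longrightarrow> l \<le> n \<Longrightarrow> z l = z' l"
  shows "ffun eps Lf m n i z = ffun eps Lf m n i z'"
  unfolding ffun_alt using assms by (intro arg_cong[where f="\<lambda>a. _ * a"] hfun_local) auto

lemma grad_f0:
  assumes "odd n" "1 \<le> i" "i \<le> m" "1 \<le> k" "k \<le> n"
  shows "grad (m*n) (f0 eps Lf m n) x ((i-1)*n + k) = G eps Lf m n i (blk n x i) k"
proof -
  define c where "c = (i-1)*n + k"
  have c: "1 \<le> c" "c \<le> m*n"
  proof -
    have "(i-1)*n + k \<le> (i-1)*n + n" using assms by simp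
    also have "\<dots> = i * n" using assms by (cases i) auto
    also have "\<dots> \<le> m * n" using assms by simp
    finally show "c \<le> m*n" by (simp add: c_def)
  qed (use assms in \<open>simp add: c_def\<close>)
  have bi: "blk n (x(c:=t)) i l = ((blk n x i)(k:=t)) l" if "1 \<le> l" "l \<le> n" for t l
    using blk_inj[where i=i and i'=i and j=l and k=k and n=n] that assms by (auto simp: blk_def c_def)
  have bo: "blk n (x(c:=t)) i' l = blk n x i' l" if "1 \<le> l" "l \<le> n" "i' \<in> {1..m} - {i}" for t l i'
    using blk_inj[where i=i and i'=i' and j=l and k=k and n=n] that assms by (auto simp: blk_def c_def)
  have e: "(\<lambda>t. f0 eps Lf m n (x(c:=t))) = (\<lambda>t. ffun eps Lf m n i ((blk n x i)(k:=t)) + (\<Sum>i'\<in>{1..m}-{i}. ffun eps Lf m n i' (blk n x i')))"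
  proof
    fix t
    have "f0 eps Lf m n (x(c:=t)) = ffun eps Lf m n i (blk n (x(c:=t)) i) + (\<Sum>i'\<in>{1..m}-{i}. ffun eps Lf m n i' (blk n (x(c:=t)) i'))"
      unfolding f0_def using assms by (subst sum.remove[of _ i]) auto
    also have "\<dots> = ffun eps Lf m n i ((blk n x i)(k:=t)) + (\<Sum>i'\<in>{1..m}-{i}. ffun eps Lf m n i' (blk n x i'))"
      using bi bo assms(1) by (intro arg_cong2[where f="(+)"] sum.cong ffun_local) auto
    finally show "f0 eps Lf m n (x(c:=t)) = \<dots>" .
  qed
  have xc: "x c = blk n x i k" by (simp add: blk_def c_def)
  have "((\<lambda>t. f0 eps Lf m n (x(c:=t))) has_real_derivative G eps Lf m n i (blk n x i) k + 0) (at (x c))"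
    unfolding e xc by (intro DERIV_add ffun_deriv[OF assms(1)] DERIV_const)
  then have "deriv (\<lambda>t. f0 eps Lf m n (x(c:=t))) (x c) = G eps Lf m n i (blk n x i) k"
    by (simp add: DERIV_imp_deriv)
  then show ?thesis using c unfolding grad_def c_def[symmetric] by simp
qed



lemma L2_sum:
  assumes "finite P"
  shows "L2_set (\<lambda>k. \<Sum>p\<in>P. f p k) A \<le> (\<Sum>p\<in>P. L2_set (f p) A)"
  using assms
proof (induction P rule: finite_induct)
  case empty then show ?case by (simp add: L2_set_def)
next
  case (insert p P)
  have "L2_set (\<lambda>k. \<Sum>p\<in>insert p P. f p k) A = L2_set (\<lambda>k. f p k + (\<Sum>p\<in>P. f p k)) A"
    using insert by simp
  also have "\<dots> \<le> L2_set (f p) A + L2_set (\<lambda>k. \<Sum>p\<in>P. f p k) A" by (rule L2_set_triangle_ineq)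
  also have "\<dots> \<le> L2_set (f p) A + (\<Sum>p\<in>P. L2_set (f p) A)" using insert by simp
  finally show ?case using insert by simp
qed

lemma L2_neg: "L2_set (\<lambda>k. f k - g k) A = L2_set (\<lambda>k. g k - f k) A"
  unfolding L2_set_def by (simp add: power2_commute)

lemma L2_sq: "(L2_set f A)\<^sup>2 = (\<Sum>k\<in>A. (f k)\<^sup>2)"
  unfolding L2_set_def by (simp add: sum_nonneg)

lemma telescope_norm:
  fixes X :: "nat \<Rightarrow> nat \<Rightarrow> real"
  assumes "1 \<le> i" "i \<le> j" "j \<le> m"
  shows "L2_set (\<lambda>k. X j k - X i k) A \<le> (\<Sum>p=1..m-1. L2_set (\<lambda>k. X (p+1) k - X p k) A)"
proof -
  have "L2_set (\<lambda>k. X j k - X i k) A = L2_set (\<lambda>k. \<Sum>p\<in>{i..<j}. X (Suc p) k - X p k) A"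
    using sum_Suc_diff'[OF assms(2), of "\<lambda>p. X p _"] by simp
  also have "\<dots> \<le> (\<Sum>p\<in>{i..<j}. L2_set (\<lambda>k. X (Suc p) k - X p k) A)" by (rule L2_sum) simp
  also have "\<dots> = (\<Sum>p\<in>{i..<j}. L2_set (\<lambda>k. X (p+1) k - X p k) A)" by simp
  also have "\<dots> \<le> (\<Sum>p=1..m-1. L2_set (\<lambda>k. X (p+1) k - X p k) A)"
    using assms by (intro sum_mono2) auto
  finally show ?thesis .
qed

lemma telescope_norm2:
  fixes X :: "nat \<Rightarrow> nat \<Rightarrow> real"
  assumes "1 \<le> i" "i \<le> m" "1 \<le> j" "j \<le> m"
  shows "L2_set (\<lambda>k. X j k - X i k) A \<le> (\<Sum>p=1..m-1. L2_set (\<lambda>k. X (p+1) k - X p k) A)"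
proof (cases "i \<le> j")
  case True then show ?thesis using telescope_norm assms by blast
next
  case False
  have "L2_set (\<lambda>k. X j k - X i k) A = L2_set (\<lambda>k. X i k - X j k) A" by (rule L2_neg)
  moreover have "L2_set (\<lambda>k. X i k - X j k) A \<le> (\<Sum>p=1..m-1. L2_set (\<lambda>k. X (p+1) k - X p k) A)"
    using telescope_norm[of j i m X A] assms False by simp
  ultimately show ?thesis by simp
qed



theorem lemma6:
  fixes eps Lf :: real and m1 m2 m dbar d :: nat and x :: "nat \<Rightarrow> real"
  assumes "0 < eps" "eps < 1" "0 < Lf"
    and "m1 \<ge> 2" "m2 \<ge> 1" "even (m1 * m2)" "m = 3 * m1 * m2"
    and "odd dbar" "dbar \<ge> 5" "d = m * dbar"
  shows "max (enorm ((m - 1) * dbar) (matvec (Hmat m Lf dbar) d x))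
             (Inf {enorm d (\<lambda>c. grad d (f0 eps Lf m dbar) x c
                                   + matTvec (Hmat m Lf dbar) ((m - 1) * dbar) \<gamma> c) | \<gamma>. True})
         \<ge> sqrt (real m) / 2 *
           enorm dbar (\<lambda>j. (1 / real m) *
              (\<Sum>i=1..m. grad dbar (ffun eps Lf m dbar i) (xbar m dbar x) j))"
proof -
  define n where "n = dbar"
  have odd: "odd n" using assms by (simp add: n_def)
  have m1: "1 \<le> m" using assms by simp
  have mpos: "0 < real m" using m1 by simp
  define X where "X i = blk n x i" for i
  define nrm where "nrm v = L2_set v {1..n}" for v
  define g where "g i k = G eps Lf m n i (X i) k" for i k
  define xb where "xb = xbar m n x"
  define gb where "gb i k = G eps Lf m n i xb k" for i k
  define DD where "DD = (\<Sum>p=1..m-1. \<Sum>q=1..n. (X (p+1) q - X p q)\<^sup>2)"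
  define T where "T = (\<Sum>p=1..m-1. nrm (\<lambda>k. X (p+1) k - X p k))"
  define HX where "HX = enorm ((m - 1) * dbar) (matvec (Hmat m Lf dbar) d x)"
  define IS where "IS = Inf {enorm d (\<lambda>c. grad d (f0 eps Lf m dbar) x c
                                   + matTvec (Hmat m Lf dbar) ((m - 1) * dbar) \<gamma> c) | \<gamma>. True}"
  define B where "B = nrm (\<lambda>k. (1 / real m) * (\<Sum>i=1..m. g i k))"
  define A where "A = nrm (\<lambda>k. (1 / real m) * (\<Sum>i=1..m. gb i k))"
  have RHS: "enorm dbar (\<lambda>j. (1 / real m) * (\<Sum>i=1..m. grad dbar (ffun eps Lf m dbar i) (xbar m dbar x) j)) = A"
    unfolding enorm_def A_def nrm_def L2_set_def n_def[symmetric]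
  proof (intro arg_cong[where f=sqrt] sum.cong refl)
    fix j assume j: "j \<in> {1..n}"
    have "(\<Sum>i=1..m. grad n (ffun eps Lf m n i) (xbar m n x) j) = (\<Sum>i=1..m. gb i j)"
      using j grad_ffun[OF odd] by (intro sum.cong refl) (simp add: gb_def xb_def)
    then show "((1 / real m) * (\<Sum>i=1..m. grad n (ffun eps Lf m n i) (xbar m n x) j))\<^sup>2 = ((1 / real m) * (\<Sum>i=1..m. gb i j))\<^sup>2"
      by simp
  qed
  have HX: "HX = real m * Lf * sqrt DD"
  proof -
    have "HX = sqrt (\<Sum>r=1..(m-1)*n. (matvec (Hmat m Lf n) (m*n) x r)\<^sup>2)"
      unfolding HX_def enorm_def using assms by (simp add: n_def)
    also have "(\<Sum>r=1..(m-1)*n. (matvec (Hmat m Lf n) (m*n) x r)\<^sup>2)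
        = (\<Sum>p=1..m-1. \<Sum>q=1..n. (matvec (Hmat m Lf n) (m*n) x ((p-1)*n+q))\<^sup>2)"
      by (rule sum_blocks)
    also have "\<dots> = (\<Sum>p=1..m-1. \<Sum>q=1..n. (real m * Lf)\<^sup>2 * (X (p+1) q - X p q)\<^sup>2)"
    proof (intro sum.cong refl)
      fix p q assume p: "p \<in> {1..m-1}" and q: "q \<in> {1..n}"
      show "(matvec (Hmat m Lf n) (m*n) x ((p-1)*n+q))\<^sup>2 = (real m * Lf)\<^sup>2 * (X (p+1) q - X p q)\<^sup>2"
        using matvec_H[of p m q n Lf x] p q by (simp add: X_def blk_def power_mult_distrib)
    qed
    also have "\<dots> = (real m * Lf)\<^sup>2 * DD" by (simp add: DD_def sum_distrib_left)
    finally show ?thesis using assms by (simp add: real_sqrt_mult)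
  qed
  have IS: "sqrt (real m) * B \<le> IS"
    unfolding IS_def
  proof (rule cInf_greatest)
    show "{enorm d (\<lambda>c. grad d (f0 eps Lf m dbar) x c + matTvec (Hmat m Lf dbar) ((m - 1) * dbar) \<gamma> c) | \<gamma>. True} \<noteq> {}"
      by blast
    fix e assume "e \<in> {enorm d (\<lambda>c. grad d (f0 eps Lf m dbar) x c + matTvec (Hmat m Lf dbar) ((m - 1) * dbar) \<gamma> c) | \<gamma>. True}"
    then obtain \<gamma> where e: "e = enorm d (\<lambda>c. grad d (f0 eps Lf m dbar) x c + matTvec (Hmat m Lf dbar) ((m - 1) * dbar) \<gamma> c)"
      by blast
    define v where "v c = grad (m*n) (f0 eps Lf m n) x c + matTvec (Hmat m Lf n) ((m - 1) * n) \<gamma> c" for c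
    have e2: "e = sqrt (\<Sum>c=1..m*n. (v c)\<^sup>2)" unfolding e enorm_def v_def using assms by (simp add: n_def)
    have "(\<Sum>c=1..m*n. (v c)\<^sup>2) = (\<Sum>i=1..m. \<Sum>k=1..n. (v ((i-1)*n+k))\<^sup>2)" by (rule sum_blocks)
    also have "\<dots> = (\<Sum>k=1..n. \<Sum>i=1..m. (v ((i-1)*n+k))\<^sup>2)" by (rule sum.swap)
    finally have vs: "(\<Sum>c=1..m*n. (v c)\<^sup>2) = (\<Sum>k=1..n. \<Sum>i=1..m. (v ((i-1)*n+k))\<^sup>2)" .
    have pk: "real m * ((1 / real m) * (\<Sum>i=1..m. g i k))\<^sup>2 \<le> (\<Sum>i=1..m. (v ((i-1)*n+k))\<^sup>2)"
      if k: "k \<in> {1..n}" for k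
    proof -
      have "(\<Sum>i=1..m. v ((i-1)*n+k)) = (\<Sum>i=1..m. g i k) + (\<Sum>i=1..m. matTvec (Hmat m Lf n) ((m - 1) * n) \<gamma> ((i-1)*n+k))"
        unfolding v_def sum.distrib using k grad_f0[OF odd] by (intro arg_cong2[where f="(+)"] sum.cong refl) (auto simp: g_def X_def)
      also have "\<dots> = (\<Sum>i=1..m. g i k)" using HT_colsum[of k n m Lf \<gamma>] k by simp
      finally have sv: "(\<Sum>i=1..m. v ((i-1)*n+k)) = (\<Sum>i=1..m. g i k)" .
      have "(\<Sum>i=1..m. g i k)\<^sup>2 \<le> (\<Sum>i=1..m. (v ((i-1)*n+k))\<^sup>2) * real m"
        using sum_squared_le_sum_of_squares[of "\<lambda>i. v ((i-1)*n+k)" "{1..m}"] sv by simp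
      then show ?thesis using mpos by (simp add: power2_eq_square field_simps)
    qed
    have "real m * B\<^sup>2 = (\<Sum>k=1..n. real m * ((1 / real m) * (\<Sum>i=1..m. g i k))\<^sup>2)"
      unfolding B_def nrm_def L2_sq by (simp add: sum_distrib_left)
    also have "\<dots> \<le> (\<Sum>c=1..m*n. (v c)\<^sup>2)" unfolding vs by (rule sum_mono) (rule pk)
    finally have "sqrt (real m * B\<^sup>2) \<le> e" unfolding e2 by simp
    moreover have "sqrt (real m * B\<^sup>2) = sqrt (real m) * B" by (simp add: real_sqrt_mult B_def nrm_def)
    ultimately show "sqrt (real m) * B \<le> e" by simp
  qed
  have TD: "T \<le> sqrt (real m - 1) * sqrt DD"
  proof -
    have "T\<^sup>2 \<le> (\<Sum>p=1..m-1. (nrm (\<lambda>k. X (p+1) k - X p k))\<^sup>2) * real (card {1..m-1})"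
      unfolding T_def by (rule sum_squared_le_sum_of_squares)
    also have "(\<Sum>p=1..m-1. (nrm (\<lambda>k. X (p+1) k - X p k))\<^sup>2) = DD"
      unfolding DD_def nrm_def L2_sq by simp
    also have "real (card {1..m-1}) = real m - 1" using m1 by (simp add: of_nat_diff)
    finally have "T\<^sup>2 \<le> DD * (real m - 1)" .
    then have "sqrt (T\<^sup>2) \<le> sqrt (DD * (real m - 1))" by (rule real_sqrt_le_mono)
    moreover have "0 \<le> T" unfolding T_def nrm_def by (intro sum_nonneg) simp
    ultimately show ?thesis by (simp add: real_sqrt_mult mult.commute)
  qed
  have XT: "nrm (\<lambda>k. xb k - X i k) \<le> T" if i: "i \<in> {1..m}" for i
  proof -
    have "xb k - X i k = (1 / real m) * (\<Sum>j=1..m. X j k - X i k)" for k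
    proof -
      have "(1 / real m) * (\<Sum>j=1..m. X i k) = X i k" using mpos by simp
      then show ?thesis unfolding xb_def xbar_def X_def sum_subtractf right_diff_distrib by simp
    qed
    then have "nrm (\<lambda>k. xb k - X i k) = nrm (\<lambda>k. (1 / real m) * (\<Sum>j=1..m. X j k - X i k))"
      by presburger
    also have "\<dots> = (1 / real m) * nrm (\<lambda>k. \<Sum>j=1..m. X j k - X i k)"
      unfolding nrm_def by (rule L2_set_right_distrib[symmetric]) (use mpos in simp)
    also have "\<dots> \<le> (1 / real m) * (\<Sum>j=1..m. nrm (\<lambda>k. X j k - X i k))"
      unfolding nrm_def using mpos by (intro mult_left_mono L2_sum) auto
    also have "\<dots> \<le> (1 / real m) * (\<Sum>j=1..m. T)"
      unfolding T_def nrm_def using mpos i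
      by (intro mult_left_mono sum_mono telescope_norm2) auto
    also have "\<dots> = T" using mpos by simp
    finally show ?thesis .
  qed
  have AB: "A \<le> B + Lf * T"
  proof -
    have "A = nrm (\<lambda>k. (1 / real m) * (\<Sum>i=1..m. g i k) + (1 / real m) * (\<Sum>i=1..m. gb i k - g i k))"
      unfolding A_def sum_subtractf by (simp add: algebra_simps)
    also have "\<dots> \<le> B + nrm (\<lambda>k. (1 / real m) * (\<Sum>i=1..m. gb i k - g i k))"
      unfolding B_def nrm_def by (rule L2_set_triangle_ineq)
    also have "nrm (\<lambda>k. (1 / real m) * (\<Sum>i=1..m. gb i k - g i k)) = (1 / real m) * nrm (\<lambda>k. \<Sum>i=1..m. gb i k - g i k)"
      unfolding nrm_def by (rule L2_set_right_distrib[symmetric]) (use mpos in simp)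
    also have "\<dots> \<le> (1 / real m) * (\<Sum>i=1..m. nrm (\<lambda>k. gb i k - g i k))"
      unfolding nrm_def using mpos by (intro mult_left_mono L2_sum) auto
    also have "\<dots> \<le> (1 / real m) * (\<Sum>i=1..m. Lf * T)"
    proof (intro mult_left_mono sum_mono)
      fix i assume i: "i \<in> {1..m}"
      have "nrm (\<lambda>k. gb i k - g i k) \<le> Lf * nrm (\<lambda>k. xb k - X i k)"
        unfolding nrm_def gb_def g_def using G_lip[of eps Lf m n i xb "X i"] assms m1 by simp
      also have "\<dots> \<le> Lf * T" using XT[OF i] assms by (intro mult_left_mono) auto
      finally show "nrm (\<lambda>k. gb i k - g i k) \<le> Lf * T" .
    qed (use mpos in simp)
    also have "\<dots> = Lf * T" using mpos by simp
    finally show ?thesis by simp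
  qed
  have "sqrt (real m) * (Lf * T) \<le> HX"
  proof -
    have "sqrt (real m) * (Lf * T) \<le> sqrt (real m) * (Lf * (sqrt (real m - 1) * sqrt DD))"
      using TD assms by (intro mult_left_mono) auto
    also have "\<dots> = (sqrt (real m) * sqrt (real m - 1)) * Lf * sqrt DD" by simp
    also have "\<dots> \<le> real m * Lf * sqrt DD"
    proof -
      have "sqrt (real m) * sqrt (real m - 1) = sqrt (real m * (real m - 1))"
        using m1 by (simp add: real_sqrt_mult)
      also have "\<dots> \<le> sqrt (real m * real m)" using m1 by (intro real_sqrt_le_mono) simp
      also have "\<dots> = real m" by simp
      moreover have "0 \<le> DD" unfolding DD_def by (intro sum_nonneg) simp
      ultimately show ?thesis using assms by (intro mult_right_mono) auto
    qed
    finally show ?thesis using HX by simp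
  qed
  then have "sqrt (real m) * A \<le> IS + HX"
    using AB IS mpos by (smt (verit) mult_left_mono real_sqrt_ge_zero distrib_left)
  then have "sqrt (real m) / 2 * A \<le> max HX IS" by simp
  then show ?thesis using RHS unfolding HX_def IS_def by simp
qed



end
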